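(* Let $\mathfrak{h}$ be a Lie subalgebra of finite codimension in $\mathfrak{sl}_2(\mathbb{K}[\lambda])\cong\mathfrak{sl}_2(\mathbb{K})\otimes_{\mathbb{K}}\mathbb{K}[\lambda]$. Then every solvable ideal of $\mathfrak{h}$ is zero.
   Context: $\mathbb{K}$ is $\mathbb{C}$ or $\mathbb{R}$; $\mathbb{K}[\lambda]$ is the polynomial algebra in $\lambda$, and $\mathfrak{sl}_2(\mathbb{K}[\lambda])$ has bracket $[y_1\otimes f_1,y_2\otimes f_2]=[y_1,y_2]\otimes f_1f_2$. *)

theory Defs
  imports "HOL-Analysis.Analysis" "HOL-Computational_Algebra.Polynomial"
begin

text \<open>Elements of sl_2(K[lambda]): 2x2 matrices with entries in K[lambda] and trace 0.
  Lie algebra over K with the commutator bracket; K acts by scaling all entries.\<close>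

type_synonym 'k mat2p = "'k poly ^ 2 ^ 2"

definition sl2 :: "('k::field) mat2p set" where
  "sl2 = {A. trace A = 0}"

definition lie :: "('k::field) mat2p \<Rightarrow> 'k mat2p \<Rightarrow> 'k mat2p" where
  "lie A B = A ** B - B ** A"

definition ksmult :: "'k::field \<Rightarrow> 'k mat2p \<Rightarrow> 'k mat2p" where
  "ksmult c A = (\<chi> i j. smult c (A $ i $ j))"

definition kspan :: "('k::field) mat2p set \<Rightarrow> 'k mat2p set" where
  "kspan S = {x. \<exists>vs cs. set vs \<subseteq> S \<and> length cs = length vs \<and>
      x = (\<Sum>i<length vs. ksmult (cs ! i) (vs ! i))}"

definition ksubspace :: "('k::field) mat2p set \<Rightarrow> bool" where
  "ksubspace V \<longleftrightarrow> 0 \<in> V \<and> (\<forall>x\<in>V. \<forall>y\<in>V. x + y \<in> V) \<and> (\<forall>c. \<forall>x\<in>V. ksmult c x \<in> V)"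

definition lie_subalgebra :: "('k::field) mat2p set \<Rightarrow> bool" where
  "lie_subalgebra h \<longleftrightarrow> h \<subseteq> sl2 \<and> ksubspace h \<and> (\<forall>x\<in>h. \<forall>y\<in>h. lie x y \<in> h)"

definition finite_codim :: "('k::field) mat2p set \<Rightarrow> bool" where
  "finite_codim h \<longleftrightarrow> (\<exists>F. finite F \<and> F \<subseteq> sl2 \<and> (\<forall>x\<in>sl2. \<exists>f\<in>kspan F. x - f \<in> h))"

definition lie_ideal :: "('k::field) mat2p set \<Rightarrow> 'k mat2p set \<Rightarrow> bool" where
  "lie_ideal I h \<longleftrightarrow> I \<subseteq> h \<and> ksubspace I \<and> (\<forall>x\<in>h. \<forall>y\<in>I. lie x y \<in> I)"

fun derived :: "('k::field) mat2p set \<Rightarrow> nat \<Rightarrow> 'k mat2p set" where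
  "derived I 0 = I"
| "derived I (Suc n) = kspan {lie x y | x y. x \<in> derived I n \<and> y \<in> derived I n}"

definition lie_solvable :: "('k::field) mat2p set \<Rightarrow> bool" where
  "lie_solvable I \<longleftrightarrow> (\<exists>n. derived I n = {0})"

end

theory Submission
  imports Defs
begin


definition pmult :: "'k::field poly \<Rightarrow> 'k mat2p \<Rightarrow> 'k mat2p" where
  "pmult p A = (\<chi> i j. p * A $ i $ j)"

lemma ksmult_pmult: "ksmult c A = pmult [:c:] A"
  by (simp add: ksmult_def pmult_def)

lemma mat_eq2: "(A::'a^2^2) = B \<longleftrightarrow> A$1$1 = B$1$1 \<and> A$1$2 = B$1$2 \<and> A$2$1 = B$2$1 \<and> A$2$2 = B$2$2"
  by (auto simp: vec_eq_iff forall_2)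

lemma mult2: "((A::'a::semiring_1^2^2) ** B) $ i $ j = A$i$1 * B$1$j + A$i$2 * B$2$j"
  by (simp add: matrix_matrix_mult_def sum_2)

lemmas mat_simps = mat_eq2 mult2 pmult_def lie_def

lemma lie_add_right: "lie x (y + z) = lie x y + lie x z"
  by (simp add: mat_simps algebra_simps)
lemma lie_add_left: "lie (y + z) x = lie y x + lie z x"
  by (simp add: mat_simps algebra_simps)
lemma lie_diff_left: "lie (y - z) x = lie y x - lie z x"
  by (simp add: mat_simps algebra_simps)
lemma lie_zero_right: "lie x 0 = 0"
  by (simp add: mat_simps algebra_simps)
lemma lie_zero_left: "lie 0 x = 0"
  by (simp add: mat_simps algebra_simps)
lemma lie_pmult_right: "lie x (pmult p y) = pmult p (lie x y)"
  by (simp add: mat_simps algebra_simps)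
lemma lie_pmult_left: "lie (pmult p y) x = pmult p (lie y x)"
  by (simp add: mat_simps algebra_simps)
lemma jacobi: "lie x (lie u v) = lie (lie x u) v + lie u (lie x v)"
  by (simp add: mat_simps algebra_simps)

lemma lie_sum_left: "lie (\<Sum>i<(n::nat). g i) C = (\<Sum>i<n. lie (g i) C)"
  by (induct n) (simp_all add: lie_add_left lie_zero_left)

lemma trace2: "trace (A::'a::semiring_1^2^2) = A$1$1 + A$2$2"
  by (simp add: trace_def sum_2)

lemma two_ne: "(1::2) \<noteq> 2" by simp

lemma ksmult_sum: "ksmult c (\<Sum>i<(n::nat). g i) = (\<Sum>i<n. ksmult c (g i))"
  by (induct n) (simp_all add: ksmult_def vec_eq_iff smult_add_right)

lemma ksmult_ksmult: "ksmult c (ksmult d v) = ksmult (c*d) v"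
  by (simp add: ksmult_def vec_eq_iff)

lemma ksmult_one: "ksmult 1 v = v"
  by (simp add: ksmult_def vec_eq_iff)


lemma ksub_sum: "ksubspace V \<Longrightarrow> (\<forall>i<n. f i \<in> V) \<Longrightarrow> (\<Sum>i<(n::nat). f i) \<in> V"
proof (induct n)
  case 0 then show ?case by (simp add: ksubspace_def)
next
  case (Suc n)
  then have a: "(\<Sum>i<n. f i) \<in> V" and b: "f n \<in> V" by simp_all
  have "(\<Sum>i<n. f i) + f n \<in> V" using Suc(2) a b unfolding ksubspace_def by blast
  then show ?case by simp
qed

lemma kspan_obt: assumes "x \<in> kspan S"
  obtains vs cs where "set vs \<subseteq> S" "length cs = length vs"
    "x = (\<Sum>i<length vs. ksmult (cs ! i) (vs ! i))" 
proof -
  from assms[unfolded kspan_def mem_Collect_eq] obtain vs cs where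
    "set vs \<subseteq> S \<and> length cs = length vs \<and> x = (\<Sum>i<length vs. ksmult (cs ! i) (vs ! i))"
    by (elim exE)
  then show thesis using that by (elim conjE)
qed

lemma kspan_intro: "set vs \<subseteq> S \<Longrightarrow> length cs = length vs \<Longrightarrow>
    x = (\<Sum>i<length vs. ksmult (cs ! i) (vs ! i)) \<Longrightarrow> x \<in> kspan S"
  unfolding kspan_def mem_Collect_eq by (intro exI conjI)

lemma kspan_sub: assumes "ksubspace V" "S \<subseteq> V" shows "kspan S \<subseteq> V"
proof
  fix x assume "x \<in> kspan S"
  then obtain vs cs where v: "set vs \<subseteq> S" "length cs = length vs"
    "x = (\<Sum>i<length vs. ksmult (cs ! i) (vs ! i))" by (rule kspan_obt)
  have sm: "\<And>c y. y \<in> V \<Longrightarrow> ksmult c y \<in> V" using assms(1) unfolding ksubspace_def by simp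
  have "\<forall>i<length vs. ksmult (cs ! i) (vs ! i) \<in> V"
  proof (intro allI impI)
    fix i assume "i < length vs"
    then have "vs ! i \<in> S" using v(1) nth_mem by (metis subsetD)
    then have "vs ! i \<in> V" using assms(2) by (rule subsetD[rotated])
    then show "ksmult (cs ! i) (vs ! i) \<in> V" by (rule sm)
  qed
  then show "x \<in> V" unfolding v(3) by (rule ksub_sum[OF assms(1)])
qed

lemma kspan_base: "S \<subseteq> kspan S"
proof
  fix s assume "s \<in> S"
  then show "s \<in> kspan S"
    by (intro kspan_intro[of "[s]" _ "[1]"]) (simp_all add: ksmult_one)
qed

lemma sum_split_add: "(\<Sum>i<m+(n::nat). g i) = (\<Sum>i<m. g i) + (\<Sum>i<n. g (m+i))"
  by (induct n) (simp_all add: add_ac)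

lemma kspan_ksub: "ksubspace (kspan S)"
  unfolding ksubspace_def
proof (intro conjI ballI allI)
  show "0 \<in> kspan S" by (intro kspan_intro[of "[]" _ "[]"]) simp_all
next
  fix x y assume xy: "x \<in> kspan S" "y \<in> kspan S"
  obtain vs cs where v: "set vs \<subseteq> S" "length cs = length vs"
    "x = (\<Sum>i<length vs. ksmult (cs ! i) (vs ! i))" using xy(1) by (rule kspan_obt)
  obtain ws ds where w: "set ws \<subseteq> S" "length ds = length ws"
    "y = (\<Sum>i<length ws. ksmult (ds ! i) (ws ! i))" using xy(2) by (rule kspan_obt)
  have "(\<Sum>i<length (vs@ws). ksmult ((cs@ds) ! i) ((vs@ws) ! i))
      = (\<Sum>i<length vs. ksmult ((cs@ds) ! i) ((vs@ws) ! i)) +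
        (\<Sum>i<length ws. ksmult ((cs@ds) ! (length vs + i)) ((vs@ws) ! (length vs + i)))"
    by (simp only: length_append sum_split_add)
  also have "(\<Sum>i<length vs. ksmult ((cs@ds) ! i) ((vs@ws) ! i)) = x"
    unfolding v(3) by (rule sum.cong) (simp_all add: nth_append v(2))
  also have "(\<Sum>i<length ws. ksmult ((cs@ds) ! (length vs + i)) ((vs@ws) ! (length vs + i))) = y"
    unfolding w(3) by (rule sum.cong) (simp_all add: nth_append v(2))
  finally have e: "x + y = (\<Sum>i<length (vs@ws). ksmult ((cs@ds) ! i) ((vs@ws) ! i))" by simp
  have "set (vs@ws) \<subseteq> S" "length (cs@ds) = length (vs@ws)" using v(1,2) w(1,2) by auto
  then show "x + y \<in> kspan S" using e by (rule kspan_intro)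
next
  fix c x assume "x \<in> kspan S"
  then obtain vs cs where v: "set vs \<subseteq> S" "length cs = length vs"
    "x = (\<Sum>i<length vs. ksmult (cs ! i) (vs ! i))" by (rule kspan_obt)
  have e: "ksmult c x = (\<Sum>i<length vs. ksmult (map ((*) c) cs ! i) (vs ! i))"
    unfolding v(3) ksmult_sum by (rule sum.cong) (simp_all add: ksmult_ksmult v(2))
  have "length (map ((*) c) cs) = length vs" using v by simp
  with v(1) show "ksmult c x \<in> kspan S" using e by (rule kspan_intro)
qed



lemma comp:
  fixes a :: "'k::field_char_0 mat2p"
  assumes "a$2$2 = - a$1$1"
  shows "(lie (lie (\<chi> i j. if i = 1 \<and> j = 2 then 1 else 0) a) a)$2$1 = - 2 * (a$2$1)^2"
    "(lie (lie (\<chi> i j. if i = 1 \<and> j = 2 then 1 else 0) a) a)$1$2 = 2 * a$1$2 * a$2$1 + 4 * (a$1$1)^2"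
    "(lie (lie (\<chi> i j. if i = 2 \<and> j = 1 then 1 else 0) a) a)$1$2 = - 2 * (a$1$2)^2"
  using assms by (simp_all add: lie_def mult2 algebra_simps power2_eq_square)


lemma lie_ksmult_right: "lie x (ksmult c y) = ksmult c (lie x y)"
  by (simp add: ksmult_pmult lie_pmult_right)

lemma derived_ideal:
  assumes h: "lie_subalgebra h" and J: "lie_ideal J h"
  shows "lie_ideal (kspan {lie x y | x y. x \<in> J \<and> y \<in> J}) h"
proof -
  define S where "S = {lie x y | x y. x \<in> J \<and> y \<in> J}"
  have Jh: "J \<subseteq> h" using J unfolding lie_ideal_def by simp
  have hks: "ksubspace h" using h unfolding lie_subalgebra_def by simp
  have hcl: "\<And>x y. x \<in> h \<Longrightarrow> y \<in> h \<Longrightarrow> lie x y \<in> h" using h unfolding lie_subalgebra_def by simp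
  have Jcl: "\<And>x y. x \<in> h \<Longrightarrow> y \<in> J \<Longrightarrow> lie x y \<in> J" using J unfolding lie_ideal_def by simp
  have K: "ksubspace (kspan S)" by (rule kspan_ksub)
  have Kadd: "\<And>x y. x \<in> kspan S \<Longrightarrow> y \<in> kspan S \<Longrightarrow> x + y \<in> kspan S"
    using K unfolding ksubspace_def by simp
  have Sh: "S \<subseteq> h"
  proof
    fix s assume "s \<in> S"
    then obtain x y where "s = lie x y" "x \<in> J" "y \<in> J" unfolding S_def mem_Collect_eq by auto
    then show "s \<in> h" using Jh hcl by (simp add: subset_iff)
  qed
  have cl: "\<forall>x\<in>h. \<forall>z\<in>kspan S. lie x z \<in> kspan S"
  proof (intro ballI)
    fix x z assume x: "x \<in> h" and z: "z \<in> kspan S"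
    define V where "V = {z. z \<in> kspan S \<and> lie x z \<in> kspan S}"
    have "ksubspace V" unfolding ksubspace_def
    proof (intro conjI ballI allI)
      show "0 \<in> V" unfolding V_def using K by (simp add: lie_zero_right ksubspace_def)
    next
      fix u v assume "u \<in> V" "v \<in> V"
      then show "u + v \<in> V" unfolding V_def using K by (simp add: lie_add_right ksubspace_def)
    next
      fix c u assume "u \<in> V"
      then show "ksmult c u \<in> V" unfolding V_def using K
        by (simp add: lie_ksmult_right ksubspace_def)
    qed
    moreover have "S \<subseteq> V"
    proof
      fix s assume s: "s \<in> S"
      then obtain u v where uv: "s = lie u v" "u \<in> J" "v \<in> J" unfolding S_def mem_Collect_eq by auto
      have "u \<in> h" using uv(2) Jh by (simp add: subset_iff)
      have xu: "lie x u \<in> J" and xv: "lie x v \<in> J" using Jcl[OF x] uv by simp_all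
      have "lie (lie x u) v \<in> S" unfolding S_def mem_Collect_eq using xu uv(3) by auto
      moreover have "lie u (lie x v) \<in> S" unfolding S_def mem_Collect_eq using xv uv(2) by auto
      ultimately have "lie (lie x u) v \<in> kspan S" "lie u (lie x v) \<in> kspan S"
        using kspan_base[of S] by (simp_all add: subset_iff)
      then have "lie (lie x u) v + lie u (lie x v) \<in> kspan S" by (rule Kadd)
      moreover have "lie x s = lie (lie x u) v + lie u (lie x v)" unfolding uv(1) by (rule jacobi)
      ultimately have "lie x s \<in> kspan S" by simp
      then show "s \<in> V" unfolding V_def using s kspan_base[of S] by (simp add: subset_iff)
    qed
    ultimately have "kspan S \<subseteq> V" by (rule kspan_sub)
    then show "lie x z \<in> kspan S" using z unfolding V_def by (simp add: subset_iff)
  qed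
  have "kspan S \<subseteq> h" using hks Sh by (rule kspan_sub)
  then show ?thesis unfolding lie_ideal_def S_def[symmetric]
    using K cl by simp
qed

lemma derived_ideals: "lie_subalgebra h \<Longrightarrow> lie_ideal I h \<Longrightarrow> lie_ideal (derived I n) h"
  by (induct n) (simp_all add: derived_ideal)

lemma step_exists: "P (0::nat) \<Longrightarrow> \<not> P n \<Longrightarrow> \<exists>m. P m \<and> \<not> P (Suc m)"
  by (induct n) auto


lemma witness:
  fixes a :: "'k::field_char_0 mat2p"
  assumes tr: "a$1$1 + a$2$2 = 0" and nz: "a \<noteq> 0"
  shows "\<exists>y0 i j. y0 \<in> sl2 \<and> (lie (lie y0 a) a)$i$j \<noteq> 0"
proof -
  define E :: "'k mat2p" where "E = (\<chi> i j. if i = 1 \<and> j = 2 then 1 else 0)"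
  define G :: "'k mat2p" where "G = (\<chi> i j. if i = 2 \<and> j = 1 then 1 else 0)"
  have a22: "a$2$2 = - a$1$1" using tr by (simp add: eq_neg_iff_add_eq_0 add.commute)
  have E: "E \<in> sl2" "G \<in> sl2" by (simp_all add: E_def G_def sl2_def trace2)
  note c = comp[OF a22, folded E_def G_def]
  show ?thesis
  proof (cases "a$2$1 \<noteq> 0")
    case True
    then have "(lie (lie E a) a)$2$1 \<noteq> 0" using c(1) by simp
    then show ?thesis using E(1) by blast
  next
    case r: False
    show ?thesis
    proof (cases "a$1$1 \<noteq> 0")
      case True
      then have "(lie (lie E a) a)$1$2 \<noteq> 0" using c(2) r by simp
      then show ?thesis using E(1) by blast
    next
      case p: False
      have "a$1$2 \<noteq> 0"
      proof
        assume "a$1$2 = 0"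
        then have "a = 0" using p r a22 by (simp add: mat_eq2)
        then show False using nz by simp
      qed
      then have "(lie (lie G a) a)$1$2 \<noteq> 0" using c(3) by simp
      then show ?thesis using E(2) by blast
    qed
  qed
qed


lemma main:
  fixes h I :: "'k::field_char_0 mat2p set"
  assumes hs: "lie_subalgebra h" and fc: "finite_codim h" and idl: "lie_ideal I h"
    and sv: "lie_solvable I"
  shows "I = {0}"
proof (rule ccontr)
  assume ne: "I \<noteq> {0}"
  have ideals: "\<And>n. lie_ideal (derived I n) h" using hs idl by (rule derived_ideals)
  obtain n where n: "derived I n = {0}" using sv unfolding lie_solvable_def by (elim exE)
  have "\<exists>m. derived I m \<noteq> {0} \<and> \<not> derived I (Suc m) \<noteq> {0}"
    by (rule step_exists[of "\<lambda>k. derived I k \<noteq> {0}" n]) (simp_all add: ne n)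
  then obtain m where m: "derived I m \<noteq> {0}" "derived I (Suc m) = {0}" by auto
  define J where "J = derived I m"
  have Jid: "lie_ideal J h" using ideals unfolding J_def by simp
  have "0 \<in> J" using Jid unfolding lie_ideal_def ksubspace_def by simp
  then obtain a where a: "a \<in> J" "a \<noteq> 0" using m(1) unfolding J_def by auto
  have ab: "\<And>x y. x \<in> J \<Longrightarrow> y \<in> J \<Longrightarrow> lie x y = 0"
  proof -
    fix x y assume "x \<in> J" "y \<in> J"
    then have "lie x y \<in> {lie x y | x y. x \<in> J \<and> y \<in> J}" unfolding mem_Collect_eq by auto
    then have "lie x y \<in> kspan {lie x y | x y. x \<in> J \<and> y \<in> J}" by (rule subsetD[OF kspan_base])
    then have "lie x y \<in> derived I (Suc m)" unfolding J_def by simp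
    then show "lie x y = 0" using m(2) by simp
  qed
  have Jcl: "\<And>x y. x \<in> h \<Longrightarrow> y \<in> J \<Longrightarrow> lie x y \<in> J" using Jid unfolding lie_ideal_def by simp
  define L where "L y = lie (lie y a) a" for y
  have Lh: "\<And>y. y \<in> h \<Longrightarrow> L y = 0"
    unfolding L_def by (rule ab[OF Jcl a(1)]) (simp_all add: a(1))
  have "a \<in> sl2" using Jid a(1) hs unfolding lie_ideal_def lie_subalgebra_def by (simp add: subset_iff)
  then have atr: "a$1$1 + a$2$2 = 0" unfolding sl2_def trace2 by simp
  obtain y0 i j where y0: "y0 \<in> sl2" "(L y0)$i$j \<noteq> 0"
    using witness[OF atr a(2)] unfolding L_def by (elim exE conjE)
  obtain F where F: "finite F" "F \<subseteq> sl2" "\<forall>x\<in>sl2. \<exists>f\<in>kspan F. x - f \<in> h"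
    using fc unfolding finite_codim_def by (elim exE conjE)
  define D where "D = Max ((\<lambda>g. degree ((L g)$i$j)) ` F)"
  have bound: "degree ((L f)$i$j) \<le> D" if fF: "f \<in> kspan F" for f
  proof -
    obtain vs cs where v: "set vs \<subseteq> F" "length cs = length vs"
      "f = (\<Sum>i<length vs. ksmult (cs ! i) (vs ! i))" using fF by (rule kspan_obt)
    have "L f = (\<Sum>t<length vs. ksmult (cs!t) (L (vs!t)))"
      unfolding L_def v(3) by (simp add: lie_sum_left ksmult_pmult lie_pmult_left)
    then have "(L f)$i$j = (\<Sum>t<length vs. smult (cs!t) ((L (vs!t))$i$j))"
      by (simp add: ksmult_def)
    also have "degree \<dots> \<le> D"
    proof (rule degree_sum_le)
      fix t assume "t \<in> {..<length vs}"
      then have "vs ! t \<in> F" using v(1) nth_mem by (metis lessThan_iff subsetD)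
      then have "degree ((L (vs!t))$i$j) \<le> D" unfolding D_def
        by (intro Max_ge) (simp_all add: F(1))
      then show "degree (smult (cs!t) ((L (vs!t))$i$j)) \<le> D"
        by (rule order.trans[OF degree_smult_le])
    qed simp
    finally show ?thesis .
  qed
  define p :: "'k poly" where "p = monom 1 (Suc D)"
  define y1 where "y1 = pmult p y0"
  have "y1 \<in> sl2" using y0(1) unfolding y1_def sl2_def trace2 pmult_def
    by (simp add: distrib_left[symmetric])
  then obtain f where f: "f \<in> kspan F" "y1 - f \<in> h" using F(3) by auto
  have "L y1 - L f = 0" using Lh[OF f(2)] unfolding L_def lie_diff_left by simp
  then have e: "L y1 = L f" by simp
  have "(L y1)$i$j = p * (L y0)$i$j" unfolding L_def y1_def lie_pmult_left by (simp add: pmult_def)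
  moreover have "degree (p * (L y0)$i$j) = Suc D + degree ((L y0)$i$j)"
    using y0(2) unfolding p_def by (simp add: degree_mult_eq degree_monom_eq)
  ultimately show False using bound[OF f(1)] e by simp
qed

theorem lemma6p2:
  shows "(\<forall>(h :: real mat2p set) I. lie_subalgebra h \<and> finite_codim h \<and> lie_ideal I h \<and> lie_solvable I \<longrightarrow> I = {0})
       \<and> (\<forall>(h :: complex mat2p set) I. lie_subalgebra h \<and> finite_codim h \<and> lie_ideal I h \<and> lie_solvable I \<longrightarrow> I = {0})"
proof (intro conjI allI impI)
  fix h I :: "real mat2p set"
  assume "lie_subalgebra h \<and> finite_codim h \<and> lie_ideal I h \<and> lie_solvable I"
  then show "I = {0}" by (elim conjE) (rule main)
next
  fix h I :: "complex mat2p set"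
  assume "lie_subalgebra h \<and> finite_codim h \<and> lie_ideal I h \<and> lie_solvable I"
  then show "I = {0}" by (elim conjE) (rule main)
qed

end
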